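(* Let $b > 0$ with $b \neq 1$, let $p > 0$, and let $\epsilon \in (0,1)$. The fast approximate exponentiation algorithm described below, run on base $b$, exponent $p$ and a depth $i = \mathcal{O}\left(\log\left(\frac{|\log b|}{\epsilon}\right)\right)$, outputs a number $r$ satisfying $(1-\epsilon)\, b^p \leq r \leq (1+\epsilon)\, b^p$, i.e. a $(1\pm\epsilon)$-approximation of $b^p$, after performing $\mathcal{O}\left(\log\left(\frac{|\log b|}{\epsilon}\right)\right)$ operations.
   Context: Fast approximate exponentiation algorithm (input: base $b>0$, exponent $p>0$, depth $i\in\mathbb{N}$), using only multiplications, divisions and square roots. Write $p = z + f$ with $z = \lfloor p \rfloor$ and $f = p - \lfloor p\rfloor \in [0,1)$. (1) Compute $b^{z}$ exactly by binary exponentiation: if $z = \sum_{j=0}^{t} 2^{t-j} c_j$ is the binary representation of $z$ ($c_0 = 1$), set $n_0 = 1$, $n_j = 2 n_{j-1} + c_j$, and correspondingly $b^{n_j} = (b^{n_{j-1}})^2 b^{c_j}$. (2) Approximate $b^{f}$ by $b^{f'}$ where $f' = \sum_{j=1}^{i} s_j 2^{-j}$ is a dyadic rational built greedily: $s_1 = 1$, and for $j>1$, $s_j = 1$ if the current partial sum $\sum_{l<j} s_l 2^{-l}$ is less than $f$, $s_j = -1$ if it is greater than $f$, and the process stops if it equals $f$; so $|f - f'| \leq 2^{-i}$. The power $b^{f'}$ is accumulated by computing successive square roots $b^{1/2^j}$ and multiplying (if $s_j=1$) or dividing (if $s_j=-1$) by $b^{1/2^j}$. The output is $r = b^{z}\,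 b^{f'}$. *)

theory Defs
  imports Complex_Main
begin

text \<open>Binary exponentiation (square-and-multiply) of a real base by a natural exponent.
  Returns the value together with the number of arithmetic operations
  (multiplications) performed.\<close>
fun binpow :: "real \<Rightarrow> nat \<Rightarrow> real \<times> nat" where
  "binpow b n =
     (if n = 0 then (1, 0)
      else (let (r, c) = binpow b (n div 2) in
            if n mod 2 = 0 then (r * r, c + 1) else (r * r * b, c + 2)))"

text \<open>Greedy dyadic approximation of b powr f.
  Arguments: base b, target fraction f, remaining steps k, current index j,
  current root rt = b powr (1/2^(j-1)), current partial sum S,
  accumulated value acc, operation counter cnt.
  Each step computes one square root and one multiplication or division.\<close>
fun frac_loop :: "real \<Rightarrow> real \<Rightarrow> nat \<Rightarrow> nat \<Rightarrow> real \<Rightarrow> real \<Rightarrow> real \<Rightarrow> nat \<Rightarrow> real \<times> nat" where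
  "frac_loop b f 0 j rt S acc cnt = (acc, cnt)"
| "frac_loop b f (Suc k) j rt S acc cnt =
     (let rt' = sqrt rt in
      if j = 1 then frac_loop b f k (Suc j) rt' (S + 1 / 2 ^ j) (acc * rt') (cnt + 2)
      else if S < f then frac_loop b f k (Suc j) rt' (S + 1 / 2 ^ j) (acc * rt') (cnt + 2)
      else if S > f then frac_loop b f k (Suc j) rt' (S - 1 / 2 ^ j) (acc / rt') (cnt + 2)
      else (acc, cnt))"

definition fast_exp :: "real \<Rightarrow> real \<Rightarrow> nat \<Rightarrow> real \<times> nat" where
  "fast_exp b p i =
     (let z = nat \<lfloor>p\<rfloor>; f = p - of_int \<lfloor>p\<rfloor>;
          (x, c1) = binpow b z;
          (y, c2) = frac_loop b f i 1 b 0 1 0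
      in (x * y, c1 + c2 + 1))"

text \<open>The complexity measure log(|log b| / eps), made nonnegative (with +1) so
  that O(.) is meaningful also when |log b|/eps is small.\<close>
definition cost_bound :: "real \<Rightarrow> real \<Rightarrow> real" where
  "cost_bound b eps = 1 + max 0 (ln (\<bar>ln b\<bar> / eps))"

end

theory Submission
  imports Defs
begin

declare binpow.simps[simp del]

lemma binpow_fst: "fst (binpow b n) = b ^ n"
proof (induction n rule: less_induct)
  case (less n)
  show ?case
  proof (cases "n = 0")
    case True then show ?thesis by (simp add: binpow.simps)
  next
    case False
    obtain r c where rc: "binpow b (n div 2) = (r, c)" by (cases "binpow b (n div 2)")
    have r: "r = b ^ (n div 2)" using less[of "n div 2"] False rc by simp
    have "n = 2 * (n div 2) + n mod 2" by simp
    then have "b ^ n = b ^ (n div 2) * b ^ (n div 2) * b ^ (n mod 2)"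
      by (metis mult_2 power_add)
    then show ?thesis using False rc r
      by (subst binpow.simps) (auto simp: mod2_eq_if split: if_splits)
  qed
qed

lemma binpow_snd: "snd (binpow b n) \<le> 2 * n"
proof (induction n rule: less_induct)
  case (less n)
  show ?case
  proof (cases "n = 0")
    case True then show ?thesis by (simp add: binpow.simps)
  next
    case False
    obtain r c where rc: "binpow b (n div 2) = (r, c)" by (cases "binpow b (n div 2)")
    have c: "c \<le> 2 * (n div 2)" using less[of "n div 2"] False rc by simp
    have "2 * (n div 2) + 2 \<le> 2 * n" using False by (cases n) auto
    then show ?thesis using False rc c
      by (subst binpow.simps) auto
  qed
qed

lemma frac_cnt: "snd (frac_loop b f k j rt S acc cnt) \<le> cnt + 2 * k"
proof (induction k arbitrary: j rt S acc cnt)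
  case 0 then show ?case by simp
next
  case (Suc k)
  show ?case
    using Suc[of "Suc j" "sqrt rt" "S + 1 / 2 ^ j" "acc * sqrt rt" "cnt + 2"]
          Suc[of "Suc j" "sqrt rt" "S - 1 / 2 ^ j" "acc / sqrt rt" "cnt + 2"]
    by (auto simp: Let_def)
qed

lemma frac_val:
  assumes "0 < b" "0 \<le> f" "f < 1" "rt = b powr (1 / 2 ^ m)" "acc = b powr S"
    "\<bar>S - f\<bar> \<le> 1 / 2 ^ m" "m = 0 \<longrightarrow> S = 0"
  shows "\<exists>S'. fst (frac_loop b f k (Suc m) rt S acc cnt) = b powr S' \<and> \<bar>S' - f\<bar> \<le> 1 / 2 ^ (m + k)"
  using assms
proof (induction k arbitrary: m rt S acc cnt)
  case 0 then show ?case by auto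
next
  case (Suc k)
  have rt': "sqrt rt = b powr (1 / 2 ^ Suc m)"
    using Suc.prems by (simp add: powr_half_sqrt_powr[symmetric] mult.commute)
  have add: "acc * sqrt rt = b powr (S + 1 / 2 ^ Suc m)"
    using Suc.prems rt' by (simp add: powr_add)
  have sub: "acc / sqrt rt = b powr (S - 1 / 2 ^ Suc m)"
    using Suc.prems rt' by (simp add: powr_diff)
  have e: "(1::real) / 2 ^ m = 2 * (1 / 2 ^ Suc m)" by simp
  have p: "(0::real) < 1 / 2 ^ Suc m" by simp
  have IHa: "\<exists>S'. fst (frac_loop b f k (Suc (Suc m)) (sqrt rt) (S + 1 / 2 ^ Suc m) (acc * sqrt rt) c) = b powr S' \<and> \<bar>S' - f\<bar> \<le> 1 / 2 ^ (m + Suc k)"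
    if "\<bar>S + 1 / 2 ^ Suc m - f\<bar> \<le> 1 / 2 ^ Suc m" for c
    using Suc.IH[where m="Suc m" and rt="sqrt rt" and S="S + 1 / 2 ^ Suc m" and acc="acc * sqrt rt" and cnt=c] Suc.prems rt' add that
    by simp
  have IHs: "\<exists>S'. fst (frac_loop b f k (Suc (Suc m)) (sqrt rt) (S - 1 / 2 ^ Suc m) (acc / sqrt rt) c) = b powr S' \<and> \<bar>S' - f\<bar> \<le> 1 / 2 ^ (m + Suc k)"
    if "\<bar>S - 1 / 2 ^ Suc m - f\<bar> \<le> 1 / 2 ^ Suc m" for c
    using Suc.IH[where m="Suc m" and rt="sqrt rt" and S="S - 1 / 2 ^ Suc m" and acc="acc / sqrt rt" and cnt=c] Suc.prems rt' sub that
    by simp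
  show ?case
  proof (cases "m = 0")
    case True
    then have "\<bar>S + 1 / 2 ^ Suc m - f\<bar> \<le> 1 / 2 ^ Suc m" using Suc.prems by (auto simp: abs_if)
    then show ?thesis using IHa True by (simp add: Let_def)
  next
    case False
    show ?thesis
    proof (cases "S < f")
      case True
      then have "\<bar>S + 1 / 2 ^ Suc m - f\<bar> \<le> 1 / 2 ^ Suc m" using Suc.prems(6) e p by linarith
      then show ?thesis using IHa True False by (simp add: Let_def)
    next
      case F2: False
      show ?thesis
      proof (cases "S > f")
        case True
        then have "\<bar>S - 1 / 2 ^ Suc m - f\<bar> \<le> 1 / 2 ^ Suc m" using Suc.prems(6) e p by linarith
        then show ?thesis using IHs True False F2 by (simp add: Let_def)
      next
        case F3: False
        then have "S = f" using F2 by simp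
        then show ?thesis using False F2 F3 Suc.prems(5) by (auto simp: Let_def)
      qed
    qed
  qed
qed


lemma fast_exp_fst: "fst (fast_exp b p i) = fst (binpow b (nat \<lfloor>p\<rfloor>)) * fst (frac_loop b (p - of_int \<lfloor>p\<rfloor>) i 1 b 0 1 0)"
  by (simp add: fast_exp_def Let_def split: prod.split)

lemma fast_exp_snd: "snd (fast_exp b p i) = snd (binpow b (nat \<lfloor>p\<rfloor>)) + snd (frac_loop b (p - of_int \<lfloor>p\<rfloor>) i 1 b 0 1 0) + 1"
  by (simp add: fast_exp_def Let_def split: prod.split)

lemma ln2_ge: "ln (2::real) \<ge> 1/2"
proof -
  have "exp (1/2::real) \<le> 2" using real_exp_bound_lemma[of "1/2"] by simp
  then have "ln (exp (1/2::real)) \<le> ln 2" by (subst ln_le_cancel_iff) auto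
  then show ?thesis by simp
qed
lemma two_pow_exp: "(2::real) ^ n = exp (real n * ln 2)"
proof -
  have "(2::real)^n = 2 powr real n" by (simp add: powr_realpow)
  also have "\<dots> = exp (real n * ln 2)" by (simp add: powr_def)
  finally show ?thesis .
qed
lemma nat_ceil_le: "real (nat \<lceil>y\<rceil>) \<le> max 0 y + 1"
proof (cases "y \<le> 0")
  case True
  then have "\<lceil>y\<rceil> \<le> 0" by simp
  then have "nat \<lceil>y\<rceil> = 0" by simp
  then show ?thesis by simp
next
  case False
  then have "\<lceil>y\<rceil> \<ge> 0" by simp
  then have "real (nat \<lceil>y\<rceil>) = of_int \<lceil>y\<rceil>" by simp
  moreover have "of_int \<lceil>y\<rceil> < y + 1" using ceiling_correct[of y] by linarith
  ultimately show ?thesis using False by simp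
qed

definition dd :: "real \<Rightarrow> real \<Rightarrow> nat" where
  "dd b eps = nat \<lceil>ln (\<bar>ln b\<bar> / eps) / ln 2\<rceil> + 2"

lemma dd_bound: "real (dd b eps) \<le> 3 * cost_bound b eps"
proof -
  define x where "x = ln (\<bar>ln b\<bar> / eps)"
  have l2: "ln (2::real) > 0" by simp
  have "real (nat \<lceil>x / ln 2\<rceil>) \<le> max 0 (x / ln 2) + 1" by (rule nat_ceil_le)
  moreover have "max 0 (x / ln 2) \<le> 2 * max 0 x"
  proof (cases "x \<ge> 0")
    case True
    have "x / ln 2 \<le> x / (1/2)" using ln2_ge True l2 by (intro divide_left_mono) auto
    then show ?thesis using True by simp
  next
    case False then show ?thesis using l2 by (simp add: divide_nonpos_pos)
  qed
  ultimately show ?thesis unfolding dd_def cost_bound_def x_def[symmetric] by simp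
qed

lemma dd_pow:
  assumes "0 < eps" "0 < b" "b \<noteq> 1"
  shows "\<bar>ln b\<bar> / 2 ^ dd b eps \<le> eps / 4"
proof -
  define x where "x = ln (\<bar>ln b\<bar> / eps)"
  define n where "n = nat \<lceil>x / ln 2\<rceil>"
  have pos: "\<bar>ln b\<bar> / eps > 0" using assms by simp
  have l2: "ln (2::real) > 0" by simp
  have "x / ln 2 \<le> real n" unfolding n_def using ceiling_correct[of "x / ln 2"] by linarith
  then have "x \<le> real n * ln 2" using l2 by (simp add: divide_le_eq)
  then have "exp x \<le> 2 ^ n" unfolding two_pow_exp by simp
  then have "\<bar>ln b\<bar> / eps \<le> 2 ^ n" using pos unfolding x_def by simp
  then have "\<bar>ln b\<bar> \<le> eps * 2 ^ n" using assms by (simp add: divide_le_eq mult.commute)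
  moreover have "dd b eps = n + 2" unfolding dd_def n_def x_def by simp
  then have e: "(2::real) ^ dd b eps = 4 * 2 ^ n" by (simp add: power_add)
  have "\<bar>ln b\<bar> / (4 * 2^n) \<le> eps/4 \<longleftrightarrow> \<bar>ln b\<bar> \<le> eps/4 * (4*2^n)"
    by (rule pos_divide_le_eq) simp
  moreover have "eps/4 * (4*2^n) = eps * (2::real)^n" by simp
  ultimately show ?thesis using e \<open>\<bar>ln b\<bar> \<le> eps * 2 ^ n\<close> by simp
qed

theorem theorem2:
  shows "\<exists>(d :: real \<Rightarrow> real \<Rightarrow> nat) (C :: real). C > 0 \<and>
    (\<forall>b eps. 0 < b \<and> b \<noteq> 1 \<and> 0 < eps \<and> eps < 1 \<longrightarrow>
        real (d b eps) \<le> C * cost_bound b eps) \<and>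
    (\<forall>b p eps. 0 < b \<and> b \<noteq> 1 \<and> 0 < p \<and> 0 < eps \<and> eps < 1 \<longrightarrow>
        (1 - eps) * b powr p \<le> fst (fast_exp b p (d b eps)) \<and>
        fst (fast_exp b p (d b eps)) \<le> (1 + eps) * b powr p) \<and>
    (\<forall>p > 0. \<exists>C'. \<forall>b eps. 0 < b \<and> b \<noteq> 1 \<and> 0 < eps \<and> eps < 1 \<longrightarrow>
        real (snd (fast_exp b p (d b eps))) \<le> C' * cost_bound b eps)"
proof -
  have A: "(1 - eps) * b powr p \<le> fst (fast_exp b p (dd b eps)) \<and>
        fst (fast_exp b p (dd b eps)) \<le> (1 + eps) * b powr p"
    if a: "0 < b \<and> b \<noteq> 1 \<and> 0 < p \<and> 0 < eps \<and> eps < 1" for b p eps :: real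
  proof -
  define z where "z = nat \<lfloor>p\<rfloor>"
  define f where "f = p - of_int \<lfloor>p\<rfloor>"
  have f: "0 \<le> f" "f < 1" unfolding f_def by linarith+
  have pz: "p = real z + f" unfolding z_def f_def using a by simp
  obtain S' where S': "fst (frac_loop b f (dd b eps) (Suc 0) b 0 1 0) = b powr S'"
      "\<bar>S' - f\<bar> \<le> 1 / 2 ^ dd b eps"
    using frac_val[of b f b 0 1 0 "dd b eps" 0] a f by auto
  have out: "fst (fast_exp b p (dd b eps)) = b powr p * exp ((S' - f) * ln b)"
  proof -
    have "fst (fast_exp b p (dd b eps)) = b ^ z * b powr S'"
      using S'(1) by (simp add: fast_exp_fst binpow_fst z_def f_def)
    also have "\<dots> = b powr (real z + f) * b powr (S' - f)"
      using a by (simp add: powr_add powr_realpow[symmetric] powr_diff)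
    also have "b powr (S' - f) = exp ((S' - f) * ln b)" using a by (simp add: powr_def mult.commute)
    finally show ?thesis using pz by simp
  qed
  define \<delta> where "\<delta> = (S' - f) * ln b"
  have "\<bar>\<delta>\<bar> \<le> \<bar>ln b\<bar> / 2 ^ dd b eps"
  proof -
    have "\<bar>\<delta>\<bar> = \<bar>S' - f\<bar> * \<bar>ln b\<bar>" unfolding \<delta>_def by (simp add: abs_mult)
    also have "\<dots> \<le> 1 / 2 ^ dd b eps * \<bar>ln b\<bar>" using S'(2) by (intro mult_right_mono) auto
    finally show ?thesis by simp
  qed
  also have "\<dots> \<le> eps / 4" using dd_pow a by auto
  finally have d: "\<bar>\<delta>\<bar> \<le> eps / 4" .
  have lo: "1 - eps \<le> exp \<delta>" using exp_ge_add_one_self[of \<delta>] d by linarith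
  have "exp \<delta> \<le> exp \<bar>\<delta>\<bar>" by simp
  also have "\<dots> \<le> 1 + 2 * \<bar>\<delta>\<bar>" using d a by (intro real_exp_bound_lemma) auto
  finally have hi: "exp \<delta> \<le> 1 + eps" using d by linarith
  have bp: "b powr p > 0" using a by simp
  have "(1 - eps) * b powr p \<le> fst (fast_exp b p (dd b eps))"
    unfolding out \<delta>_def[symmetric] using lo bp by (simp add: mult.commute)
  moreover have "fst (fast_exp b p (dd b eps)) \<le> (1 + eps) * b powr p"
    unfolding out \<delta>_def[symmetric] using hi bp by (simp add: mult.commute)
  ultimately show ?thesis by blast
  qed
  have B: "\<exists>C'. \<forall>b eps. 0 < b \<and> b \<noteq> 1 \<and> 0 < eps \<and> eps < 1 \<longrightarrow>
        real (snd (fast_exp b p (dd b eps))) \<le> C' * cost_bound b eps" for p :: real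
  proof (intro exI[of _ "2 * real (nat \<lfloor>p\<rfloor>) + 7"] allI impI)
    fix b eps :: real
    have cb: "cost_bound b eps \<ge> 1" unfolding cost_bound_def by simp
    have "snd (fast_exp b p (dd b eps)) \<le> 2 * nat \<lfloor>p\<rfloor> + 2 * dd b eps + 1"
      using binpow_snd[of b "nat \<lfloor>p\<rfloor>"] frac_cnt[of b "p - of_int \<lfloor>p\<rfloor>" "dd b eps" 1 b 0 1 0]
      by (simp add: fast_exp_snd)
    then have "real (snd (fast_exp b p (dd b eps))) \<le> 2 * real (nat \<lfloor>p\<rfloor>) + 2 * real (dd b eps) + 1"
      by linarith
    also have "\<dots> \<le> 2 * real (nat \<lfloor>p\<rfloor>) * cost_bound b eps + 6 * cost_bound b eps + cost_bound b eps"
    proof -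
      have "2 * real (nat \<lfloor>p\<rfloor>) * 1 \<le> 2 * real (nat \<lfloor>p\<rfloor>) * cost_bound b eps"
        using cb by (intro mult_left_mono) auto
      then show ?thesis using dd_bound[of b eps] cb by linarith
    qed
    finally show "real (snd (fast_exp b p (dd b eps))) \<le> (2 * real (nat \<lfloor>p\<rfloor>) + 7) * cost_bound b eps"
      by (simp add: algebra_simps)
  qed
  show ?thesis
    apply (rule exI[of _ dd], rule exI[of _ "3::real"])
    using dd_bound A B by simp
qed

end
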